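(* Consider the faulty-starter delivery problem described in the context, with finisher starting position $P=(x,y)$, $y\ge 0$. There exists an online algorithm with optimal (i.e. minimum possible) competitive ratio in which the finisher moves from its initial position $P$ along a straight line directly to some point $M=(m,0)$ of the segment $\overline{ST}$, and from then on it remains within the segment $\overline{ST}$.
   Context: Setting. In the plane let $S=(0,0)$ and $T=(1,0)$. A "starter" drone carrying a package starts at $S$ at time $0$ and moves at unit speed along the segment $\overline{ST}$ towards $T$. At an unknown time $t\in[0,1]$ it fails and stays forever at $(t,0)$ with the package (so at time $s$ the package is at $(\min\{s,t\},0)$). A "finisher" drone starts at time $0$ at $P=(x,y)$ with $y\ge 0$; it moves at speed (at most) $1$ and can start, stop and change direction instantaneously. The package can be handed over only when the two drones are co-located; the package is delivered at the first time the finisher, carrying the package, is at $T$. An online algorithm $\mathcal{A}$ specifies the finisher's trajectory using only $(x,y)$ (not $t$); $A(t)$ denotes its delivery time when the fail time is $t$. The optimal offline delivery time (fail time known in advance) is $\mathrm{Opt}(t)=\max\{1,\sqrt{(x-t)^2+y^2}+1-t\}$. The competitive ratio for fail time $t$ is $\mathrm{CR}_{\mathcal{A}}(t)=A(t)/\mathrm{Opt}(t)$, and the competitive ratio of $\mathcal{A}$ is $\mathrm{CR}_{\mathcal{A}}=\sup_{0\le t\le 1}\mathrm{CR}_{\mathcal{A}}(t)$. *)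

theory Defs
  imports "HOL-Analysis.Analysis"
begin

text \<open>Points of the plane are pairs of reals; dist on real \<times> real is Euclidean.
  An online algorithm is the finisher's trajectory (before pickup), a function of time
  depending only on the start point P = (x,y).\<close>

definition online_alg :: "real \<Rightarrow> real \<Rightarrow> (real \<Rightarrow> real \<times> real) \<Rightarrow> bool" where
  "online_alg x y f \<longleftrightarrow> f 0 = (x, y) \<and>
     (\<forall>s\<ge>0. \<forall>s'\<ge>0. dist (f s) (f s') \<le> \<bar>s - s'\<bar>)"

text \<open>Package position at time s when the starter fails at time t.\<close>
definition pkg :: "real \<Rightarrow> real \<Rightarrow> real \<times> real" where
  "pkg t s = (min s t, 0)"

text \<open>Delivery time: after a handover at time s (finisher co-located with the package),
  the finisher carries the package straight to T = (1,0). The earliest such delivery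
  (infinite if the finisher never meets the package).\<close>
definition deliv :: "(real \<Rightarrow> real \<times> real) \<Rightarrow> real \<Rightarrow> ereal" where
  "deliv f t = (INF s\<in>{s. s \<ge> 0 \<and> f s = pkg t s}. ereal (s + dist (f s) (1, 0)))"

definition opt :: "real \<Rightarrow> real \<Rightarrow> real \<Rightarrow> real" where
  "opt x y t = max 1 (sqrt ((x - t)\<^sup>2 + y\<^sup>2) + 1 - t)"

definition CR :: "real \<Rightarrow> real \<Rightarrow> (real \<Rightarrow> real \<times> real) \<Rightarrow> ereal" where
  "CR x y f = (SUP t\<in>{0..1}. deliv f t / ereal (opt x y t))"

end

theory Submission
  imports Defs "HOL-Complex_Analysis.Great_Picard"
begin


definition lin :: "real \<Rightarrow> real \<Rightarrow> real \<Rightarrow> real \<Rightarrow> real \<times> real" where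
  "lin x y m s = (x, y) + (s / dist (x, y) (m, 0)) *\<^sub>R ((m, 0) - (x, y))"

definition prj :: "real \<times> real \<Rightarrow> real \<times> real" where
  "prj p = (max 0 (min 1 (fst p)), 0)"

definition mkalg :: "real \<Rightarrow> real \<Rightarrow> real \<Rightarrow> (real \<Rightarrow> real \<times> real) \<Rightarrow> real \<Rightarrow> real \<times> real" where
  "mkalg x y m H s = (if s \<le> dist (x, y) (m, 0) then lin x y m s else prj (H s))"

lemma prj_lip: "dist (prj p) (prj q) \<le> dist p q"
proof -
  have "dist (prj p) (prj q) = \<bar>max 0 (min 1 (fst p)) - max 0 (min 1 (fst q))\<bar>"
    by (simp add: prj_def dist_Pair_Pair dist_real_def)
  also have "\<dots> \<le> \<bar>fst p - fst q\<bar>" by (simp add: abs_le_iff max_def min_def; linarith)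
  also have "\<dots> \<le> dist p q"
    by (metis dist_fst_le dist_real_def fst_conv)
  finally show ?thesis .
qed

lemma vec_aux: "(p::'a::real_vector) + a *\<^sub>R v - (p + b *\<^sub>R v) = (a - b) *\<^sub>R v"
  by (simp add: scaleR_diff_left)

lemma lin_dist:
  assumes "0 \<le> s" "s \<le> dist (x, y) (m, 0)" "0 \<le> s'" "s' \<le> dist (x, y) (m, 0)"
  shows "dist (lin x y m s) (lin x y m s') = \<bar>s - s'\<bar>"
proof (cases "dist (x, y) (m, 0) = 0")
  case True then show ?thesis using assms by auto
next
  case False
  let ?d = "dist (x, y) (m, 0)"
  have "dist (lin x y m s) (lin x y m s') = norm (((s - s') / ?d) *\<^sub>R ((m, 0) - (x, y)))"
    unfolding lin_def dist_norm by (simp only: vec_aux diff_divide_distrib)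
  also have "\<dots> = \<bar>(s - s') / ?d\<bar> * norm ((m, 0) - (x, y))"
    by (rule norm_scaleR)
  also have "norm ((m, 0) - (x, y)) = ?d" by (metis dist_norm dist_commute)
  also have "\<bar>(s - s') / ?d\<bar> = \<bar>s - s'\<bar> / ?d" by simp
  finally show ?thesis using False by auto
qed

lemma lin_end: "lin x y m (dist (x, y) (m, 0)) = (m, 0)"
  by (cases "dist (x, y) (m, 0) = 0") (auto simp: lin_def)

lemma lin_dist_end:
  assumes "0 \<le> s" "s \<le> dist (x, y) (m, 0)"
  shows "dist (lin x y m s) (m, 0) = dist (x, y) (m, 0) - s"
  using lin_dist[OF assms, of "dist (x, y) (m, 0)"] assms lin_end[of x y m] by simp

lemma mkalg_props:
  assumes m: "0 \<le> m" "m \<le> 1"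
    and Hd: "H (dist (x, y) (m, 0)) = (m, 0)"
    and Hl: "\<And>s s'. dist (x, y) (m, 0) \<le> s \<Longrightarrow> dist (x, y) (m, 0) \<le> s' \<Longrightarrow> dist (H s) (H s') \<le> \<bar>s - s'\<bar>"
  shows "online_alg x y (mkalg x y m H) \<and>
    (let d = dist (x, y) (m, 0) in
          (\<forall>s. 0 \<le> s \<and> s \<le> d \<longrightarrow> mkalg x y m H s = (x, y) + (s / d) *\<^sub>R ((m, 0) - (x, y))) \<and>
          (\<forall>s\<ge>d. snd (mkalg x y m H s) = 0 \<and> 0 \<le> fst (mkalg x y m H s) \<and> fst (mkalg x y m H s) \<le> 1))"
proof -
  define d where "d = dist (x, y) (m, 0)"
  have d0: "0 \<le> d" by (simp add: d_def)
  have pH: "prj (H d) = (m, 0)" using Hd m by (simp add: d_def prj_def)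
  have lip: "dist (mkalg x y m H s) (mkalg x y m H s') \<le> \<bar>s - s'\<bar>"
    if "0 \<le> s" "0 \<le> s'" "s \<le> s'" for s s'
  proof (cases "s' \<le> d")
    case True
    then show ?thesis using that lin_dist[of s x y m s'] by (simp add: mkalg_def d_def)
  next
    case False
    note F = this
    show ?thesis
    proof (cases "s \<le> d")
      case True
      have "dist (mkalg x y m H s) (mkalg x y m H s') \<le> dist (lin x y m s) (m, 0) + dist (prj (H d)) (prj (H s'))"
        using True F pH dist_triangle[of "lin x y m s" "prj (H s')" "(m,0)"]
        by (simp add: mkalg_def d_def)
      also have "\<dots> \<le> (d - s) + (s' - d)"
        using lin_dist_end[of s x y m] True that prj_lip[of "H d" "H s'"] Hl[of d s'] F
        by (simp add: d_def)
      finally show ?thesis using that by simp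
    next
      case False
      then show ?thesis using F that prj_lip[of "H s" "H s'"] Hl[of s s']
        by (simp add: mkalg_def d_def)
    qed
  qed
  have "online_alg x y (mkalg x y m H)"
    unfolding online_alg_def
  proof (intro conjI allI impI)
    show "mkalg x y m H 0 = (x, y)" by (simp add: mkalg_def lin_def)
    fix s s' :: real assume "0 \<le> s" "0 \<le> s'"
    then show "dist (mkalg x y m H s) (mkalg x y m H s') \<le> \<bar>s - s'\<bar>"
      using lip[of s s'] lip[of s' s] by (cases "s \<le> s'") (auto simp: dist_commute abs_minus_commute)
  qed
  moreover have "\<forall>s. 0 \<le> s \<and> s \<le> d \<longrightarrow> mkalg x y m H s = (x, y) + (s / d) *\<^sub>R ((m, 0) - (x, y))"
    by (simp add: mkalg_def lin_def d_def)
  moreover have "\<forall>s\<ge>d. snd (mkalg x y m H s) = 0 \<and> 0 \<le> fst (mkalg x y m H s) \<and> fst (mkalg x y m H s) \<le> 1"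
  proof (intro allI impI)
    fix s assume "d \<le> s"
    show "snd (mkalg x y m H s) = 0 \<and> 0 \<le> fst (mkalg x y m H s) \<and> fst (mkalg x y m H s) \<le> 1"
    proof (cases "s = d")
      case True then show ?thesis using lin_end[of x y m] m by (simp add: mkalg_def d_def)
    next
      case False then show ?thesis using \<open>d \<le> s\<close> by (simp add: mkalg_def d_def prj_def)
    qed
  qed
  ultimately show ?thesis by (simp add: d_def Let_def)
qed



lemma opt_ge1: "1 \<le> opt x y t" by (simp add: opt_def)

lemma CR_le:
  assumes "\<forall>t\<in>{0..1}. \<exists>s\<ge>0. f s = pkg t s \<and> s + dist (f s) (1,0) \<le> C * opt x y t"
  shows "CR x y f \<le> ereal C"
  unfolding CR_def
proof (rule SUP_least)
  fix t :: real assume t: "t \<in> {0..1}"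
  then obtain s where s: "s \<ge> 0" "f s = pkg t s" "s + dist (f s) (1,0) \<le> C * opt x y t"
    using assms by blast
  have "deliv f t \<le> ereal (s + dist (f s) (1,0))"
    unfolding deliv_def by (rule INF_lower) (use s in auto)
  also have "\<dots> \<le> ereal (opt x y t) * ereal C" using s by (simp add: mult.commute)
  finally show "deliv f t / ereal (opt x y t) \<le> ereal C"
    using opt_ge1[of x y t] by (subst ereal_divide_le_pos) auto
qed

lemma CR_ge:
  assumes "CR x y g \<le> ereal C" "t \<in> {0..1}" "e > 0"
  shows "\<exists>s\<ge>0. g s = pkg t s \<and> s + dist (g s) (1,0) < (C + e) * opt x y t"
proof -
  have "deliv g t / ereal (opt x y t) \<le> CR x y g"
    unfolding CR_def by (rule SUP_upper) (use assms in auto)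
  also have "\<dots> \<le> ereal C" by fact
  finally have "deliv g t \<le> ereal (opt x y t) * ereal C"
    using opt_ge1[of x y t] by (subst (asm) ereal_divide_le_pos) auto
  also have "\<dots> < ereal ((C + e) * opt x y t)"
    using opt_ge1[of x y t] assms(3) by (simp add: algebra_simps)
  finally have "(INF s\<in>{s. s \<ge> 0 \<and> g s = pkg t s}. ereal (s + dist (g s) (1, 0))) < ereal ((C + e) * opt x y t)"
    by (simp add: deliv_def)
  then show ?thesis by (subst (asm) INF_less_iff) auto
qed

lemma exchange:
  assumes G: "online_alg x y G" and tau: "0 \<le> \<tau>" and Gt: "G \<tau> = (m, 0)" and m: "0 \<le> m" "m \<le> 1"
  shows "online_alg x y (mkalg x y m (\<lambda>s. G (max s \<tau>))) \<and>
    (let d = dist (x, y) (m, 0) in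
          (\<forall>s. 0 \<le> s \<and> s \<le> d \<longrightarrow> mkalg x y m (\<lambda>s. G (max s \<tau>)) s = (x, y) + (s / d) *\<^sub>R ((m, 0) - (x, y))) \<and>
          (\<forall>s\<ge>d. snd (mkalg x y m (\<lambda>s. G (max s \<tau>)) s) = 0 \<and> 0 \<le> fst (mkalg x y m (\<lambda>s. G (max s \<tau>)) s) \<and> fst (mkalg x y m (\<lambda>s. G (max s \<tau>)) s) \<le> 1)) \<and>
    (\<forall>s\<ge>\<tau>. snd (G s) = 0 \<and> 0 \<le> fst (G s) \<and> fst (G s) \<le> 1 \<longrightarrow> mkalg x y m (\<lambda>s. G (max s \<tau>)) s = G s)"
proof -
  have G0: "G 0 = (x, y)" and GL: "\<And>s s'. 0 \<le> s \<Longrightarrow> 0 \<le> s' \<Longrightarrow> dist (G s) (G s') \<le> \<bar>s - s'\<bar>"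
    using G by (auto simp: online_alg_def)
  define d where "d = dist (x, y) (m, 0)"
  have dt: "d \<le> \<tau>" using GL[of 0 \<tau>] tau G0 Gt by (simp add: d_def)
  have d0: "0 \<le> d" by (simp add: d_def)
  have 1: "online_alg x y (mkalg x y m (\<lambda>s. G (max s \<tau>))) \<and>
    (let d = dist (x, y) (m, 0) in
          (\<forall>s. 0 \<le> s \<and> s \<le> d \<longrightarrow> mkalg x y m (\<lambda>s. G (max s \<tau>)) s = (x, y) + (s / d) *\<^sub>R ((m, 0) - (x, y))) \<and>
          (\<forall>s\<ge>d. snd (mkalg x y m (\<lambda>s. G (max s \<tau>)) s) = 0 \<and> 0 \<le> fst (mkalg x y m (\<lambda>s. G (max s \<tau>)) s) \<and> fst (mkalg x y m (\<lambda>s. G (max s \<tau>)) s) \<le> 1))"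
  proof (rule mkalg_props[OF m])
    show "G (max (dist (x, y) (m, 0)) \<tau>) = (m, 0)" using dt Gt by (simp add: d_def max_def)
    fix s s' :: real
    assume "dist (x, y) (m, 0) \<le> s" "dist (x, y) (m, 0) \<le> s'"
    then have "dist (G (max s \<tau>)) (G (max s' \<tau>)) \<le> \<bar>max s \<tau> - max s' \<tau>\<bar>"
      using GL tau by simp
    also have "\<dots> \<le> \<bar>s - s'\<bar>" by (simp add: max_def abs_if)
    finally show "dist (G (max s \<tau>)) (G (max s' \<tau>)) \<le> \<bar>s - s'\<bar>" .
  qed
  have 2: "mkalg x y m (\<lambda>s. G (max s \<tau>)) s = G s"
    if "s \<ge> \<tau>" "snd (G s) = 0" "0 \<le> fst (G s)" "fst (G s) \<le> 1" for s
  proof (cases "s \<le> d")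
    case True
    then have "s = d" "\<tau> = d" using that dt by auto
    then show ?thesis using lin_end[of x y m] Gt by (simp add: mkalg_def d_def)
  next
    case False
    then show ?thesis using that by (simp add: mkalg_def d_def prj_def prod_eq_iff)
  qed
  show ?thesis using 1 2 by blast
qed



lemma opt_le: "t \<in> {0..1} \<Longrightarrow> opt x y t \<le> \<bar>x\<bar> + \<bar>y\<bar> + 2"
proof -
  assume t: "t \<in> {0..1}"
  have "sqrt ((x - t)\<^sup>2 + y\<^sup>2) \<le> \<bar>x - t\<bar> + \<bar>y\<bar>"
    by (rule real_sqrt_le_iff[THEN iffD2, of _ "(\<bar>x - t\<bar> + \<bar>y\<bar>)\<^sup>2", simplified])
       (simp add: power2_eq_square algebra_simps)
  then show ?thesis using t by (simp add: opt_def) linarith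
qed

lemma limit_alg:
  fixes gs :: "nat \<Rightarrow> real \<Rightarrow> real \<times> real"
  assumes on: "\<And>n. online_alg x y (gs n)"
    and cr: "\<And>n. CR x y (gs n) \<le> ereal (c + inverse (real (Suc n)))"
  shows "\<exists>G B. online_alg x y G \<and>
     (\<forall>t\<in>{0..1}. \<exists>s. 0 \<le> s \<and> s \<le> B \<and> G s = pkg t s \<and> s + dist (G s) (1,0) \<le> c * opt x y t) \<and>
     continuous_on {0..B} G"
proof -
  define K0 where "K0 = \<bar>x\<bar> + \<bar>y\<bar> + 2"
  define B where "B = (\<bar>c\<bar> + 2) * K0"
  have K0: "K0 \<ge> 2" by (simp add: K0_def)
  have B0: "0 \<le> B" using K0 by (simp add: B_def)
  have gs0: "gs n 0 = (x, y)" for n using on[of n] by (simp add: online_alg_def)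
  have gsL: "dist (gs n a) (gs n b) \<le> \<bar>a - b\<bar>" if "0 \<le> a" "0 \<le> b" for n a b
    using on[of n] that by (simp add: online_alg_def)
  define S where "S = {0..B}"
  obtain g k where gc: "continuous_on S g" and k: "strict_mono (k :: nat \<Rightarrow> nat)"
    and unif: "\<And>e. 0 < e \<Longrightarrow> \<exists>N. \<forall>n a. n \<ge> N \<and> a \<in> S \<longrightarrow> norm (gs (k n) a - g a) < e"
  proof (rule Arzela_Ascoli[of S gs "norm (x, y) + B"])
    show "compact S" by (simp add: S_def)
    fix n a assume a: "a \<in> S"
    have "norm (gs n a) \<le> norm (gs n 0) + dist (gs n 0) (gs n a)"
      by (metis dist_norm norm_triangle_sub dist_commute)
    also have "\<dots> \<le> norm (x, y) + B" using gsL[of 0 a n] a gs0[of n] by (simp add: S_def)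
    finally show "norm (gs n a) \<le> norm (x, y) + B" .
  next
    fix a e :: real assume a: "a \<in> S" and e: "0 < e"
    show "\<exists>d>0. \<forall>n b. b \<in> S \<and> norm (a - b) < d \<longrightarrow> norm (gs n a - gs n b) < e"
    proof (intro exI[of _ e] conjI allI impI)
      fix n b assume "b \<in> S \<and> norm (a - b) < e"
      then show "norm (gs n a - gs n b) < e" using gsL[of a b n] a
        by (simp add: S_def dist_norm)
    qed (rule e)
  qed blast
  have pw: "(\<lambda>n. gs (k n) a) \<longlonglongrightarrow> g a" if "a \<in> S" for a
  proof (rule LIMSEQ_I)
    fix e :: real assume "0 < e"
    then obtain N where "\<forall>n a. n \<ge> N \<and> a \<in> S \<longrightarrow> norm (gs (k n) a - g a) < e" using unif by blast
    then show "\<exists>no. \<forall>n\<ge>no. norm (gs (k n) a - g a) < e" using that by blast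
  qed
  have g0: "g 0 = (x, y)"
  proof -
    have "(\<lambda>n. gs (k n) 0) \<longlonglongrightarrow> g 0" using pw B0 by (simp add: S_def)
    moreover have "(\<lambda>n. gs (k n) 0) \<longlonglongrightarrow> (x, y)" by (simp add: gs0)
    ultimately show ?thesis using LIMSEQ_unique by blast
  qed
  have gL: "dist (g a) (g b) \<le> \<bar>a - b\<bar>" if "a \<in> S" "b \<in> S" for a b
  proof (rule LIMSEQ_le_const2)
    show "(\<lambda>n. dist (gs (k n) a) (gs (k n) b)) \<longlonglongrightarrow> dist (g a) (g b)"
      by (intro tendsto_dist pw that)
    show "\<exists>N. \<forall>n\<ge>N. dist (gs (k n) a) (gs (k n) b) \<le> \<bar>a - b\<bar>"
      using gsL that by (auto simp: S_def)
  qed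
  define G where "G s = g (max 0 (min s B))" for s
  have GS: "s \<in> S \<Longrightarrow> G s = g s" for s by (simp add: G_def S_def)
  have Gon: "online_alg x y G"
    unfolding online_alg_def
  proof (intro conjI allI impI)
    show "G 0 = (x, y)" using B0 g0 by (simp add: G_def)
    fix s s' :: real assume "0 \<le> s" "0 \<le> s'"
    have "dist (G s) (G s') \<le> \<bar>max 0 (min s B) - max 0 (min s' B)\<bar>"
      unfolding G_def by (rule gL) (use B0 in \<open>auto simp: S_def\<close>)
    also have "\<dots> \<le> \<bar>s - s'\<bar>" by (simp add: max_def min_def abs_if)
    finally show "dist (G s) (G s') \<le> \<bar>s - s'\<bar>" .
  qed
  have Gc: "continuous_on {0..B} G"
  proof -
    have "continuous_on S G = continuous_on S g" by (rule continuous_on_cong) (auto simp: GS)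
    then show ?thesis using gc by (simp add: S_def)
  qed
  have meet: "\<exists>s. 0 \<le> s \<and> s \<le> B \<and> G s = pkg t s \<and> s + dist (G s) (1,0) \<le> c * opt x y t"
    if t: "t \<in> {0..1}" for t
  proof -
    have "\<forall>n. \<exists>s\<ge>0. gs n s = pkg t s \<and> s + dist (gs n s) (1,0) < (c + 2 * inverse (real (Suc n))) * opt x y t"
    proof
      fix n
      show "\<exists>s\<ge>0. gs n s = pkg t s \<and> s + dist (gs n s) (1,0) < (c + 2 * inverse (real (Suc n))) * opt x y t"
        using CR_ge[OF cr[of n] t, of "inverse (real (Suc n))"] by (simp add: algebra_simps)
    qed
    then obtain sq where sq: "\<And>n. sq n \<ge> 0" "\<And>n. gs n (sq n) = pkg t (sq n)"
      "\<And>n. sq n + dist (gs n (sq n)) (1,0) < (c + 2 * inverse (real (Suc n))) * opt x y t"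
      by metis
    have sqB: "sq n \<le> B" for n
    proof -
      have "inverse (real (Suc n)) \<le> 1" by (simp add: field_simps)
      then have "c + 2 * inverse (real (Suc n)) \<le> \<bar>c\<bar> + 2" by linarith
      moreover have "0 \<le> opt x y t" "opt x y t \<le> K0" using opt_le[OF t] opt_ge1[of x y t] by (auto simp: K0_def)
      ultimately have "(c + 2 * inverse (real (Suc n))) * opt x y t \<le> (\<bar>c\<bar> + 2) * K0"
        by (smt (verit, best) mult_mono mult_right_mono)
      then show ?thesis using sq(3)[of n] by (simp add: B_def) (smt (verit) zero_le_dist)
    qed
    have "seq_compact S" by (simp add: S_def compact_imp_seq_compact)
    moreover have "\<forall>n. sq (k n) \<in> S" using sq(1) sqB by (simp add: S_def)
    ultimately obtain l r where l: "l \<in> S" and r: "strict_mono (r :: nat \<Rightarrow> nat)"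
      and lim: "((\<lambda>n. sq (k n)) \<circ> r) \<longlonglongrightarrow> l"
      by (rule seq_compactE)
    define h where "h = k \<circ> r"
    have hj: "j \<le> h j" for j
      using seq_suble[OF k, of "r j"] seq_suble[OF r, of j] by (simp add: h_def)
    have lim': "(\<lambda>j. sq (h j)) \<longlonglongrightarrow> l" using lim by (simp add: h_def o_def)
    have inS: "sq (h j) \<in> S" for j using sq(1) sqB by (simp add: S_def)
    have L1: "(\<lambda>j. gs (h j) (sq (h j)) - g (sq (h j))) \<longlonglongrightarrow> 0"
    proof (rule LIMSEQ_I)
      fix e :: real assume "0 < e"
      then obtain N where N: "\<forall>n a. n \<ge> N \<and> a \<in> S \<longrightarrow> norm (gs (k n) a - g a) < e" using unif by blast
      have "norm (gs (h j) (sq (h j)) - g (sq (h j)) - 0) < e" if "j \<ge> N" for j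
        using N[rule_format, of "r j" "sq (h j)"] seq_suble[OF r, of j] that inS[of j]
        by (simp add: h_def)
      then show "\<exists>no. \<forall>j\<ge>no. norm (gs (h j) (sq (h j)) - g (sq (h j)) - 0) < e" by blast
    qed
    have L2: "(\<lambda>j. g (sq (h j))) \<longlonglongrightarrow> g l"
      by (rule continuous_on_tendsto_compose[OF gc lim' l]) (simp add: inS)
    have L3: "(\<lambda>j. gs (h j) (sq (h j))) \<longlonglongrightarrow> g l"
      using tendsto_add[OF L1 L2] by simp
    have L4: "(\<lambda>j. gs (h j) (sq (h j))) \<longlonglongrightarrow> pkg t l"
      unfolding sq(2) pkg_def by (intro tendsto_Pair tendsto_min lim' tendsto_const)
    have gl: "g l = pkg t l" using L3 L4 LIMSEQ_unique by blast
    have L5: "(\<lambda>j. sq (h j) + dist (gs (h j) (sq (h j))) (1,0)) \<longlonglongrightarrow> l + dist (g l) (1,0)"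
      by (intro tendsto_add lim' tendsto_dist L3 tendsto_const)
    have L6: "(\<lambda>j. (c + 2 * inverse (real (Suc j))) * opt x y t) \<longlonglongrightarrow> (c + 2 * 0) * opt x y t"
      by (intro tendsto_mult tendsto_add tendsto_const LIMSEQ_inverse_real_of_nat)
    have "l + dist (g l) (1,0) \<le> (c + 2 * 0) * opt x y t"
    proof (rule LIMSEQ_le[OF L5 L6], intro exI allI impI)
      fix j :: nat
      have "inverse (real (Suc (h j))) \<le> inverse (real (Suc j))"
        using hj[of j] by (simp add: field_simps)
      then have "(c + 2 * inverse (real (Suc (h j)))) * opt x y t \<le> (c + 2 * inverse (real (Suc j))) * opt x y t"
        using opt_ge1[of x y t] by (intro mult_right_mono) auto
      then show "sq (h j) + dist (gs (h j) (sq (h j))) (1,0) \<le> (c + 2 * inverse (real (Suc j))) * opt x y t"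
        using sq(3)[of "h j"] by linarith
    qed
    then show ?thesis using l gl GS[OF l] by (intro exI[of _ l]) (auto simp: S_def)
  qed
  show ?thesis using Gon meet Gc by blast
qed



lemma CR_nonneg: "0 \<le> CR x y g"
proof -
  have "0 \<le> deliv g 0" unfolding deliv_def by (rule INF_greatest) simp
  then have "0 \<le> deliv g 0 / ereal (opt x y 0)"
    using opt_ge1[of x y 0] by (simp add: ereal_le_divide_pos)
  also have "\<dots> \<le> CR x y g" unfolding CR_def by (rule SUP_upper) simp
  finally show ?thesis .
qed

theorem lemma1:
  fixes x y :: real
  assumes "y \<ge> 0"
  shows "\<exists>f. online_alg x y f \<and> (\<forall>g. online_alg x y g \<longrightarrow> CR x y f \<le> CR x y g) \<and>
    (\<exists>m. 0 \<le> m \<and> m \<le> 1 \<and>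
       (let d = dist (x, y) (m, 0) in
          (\<forall>s. 0 \<le> s \<and> s \<le> d \<longrightarrow> f s = (x, y) + (s / d) *\<^sub>R ((m, 0) - (x, y))) \<and>
          (\<forall>s\<ge>d. snd (f s) = 0 \<and> 0 \<le> fst (f s) \<and> fst (f s) \<le> 1)))"
proof (cases "\<forall>g. online_alg x y g \<longrightarrow> CR x y g = \<infinity>")
  case True
  have "online_alg x y (mkalg x y 0 (\<lambda>_. (0, 0))) \<and>
    (let d = dist (x, y) (0, 0) in
          (\<forall>s. 0 \<le> s \<and> s \<le> d \<longrightarrow> mkalg x y 0 (\<lambda>_. (0, 0)) s = (x, y) + (s / d) *\<^sub>R ((0, 0) - (x, y))) \<and>
          (\<forall>s\<ge>d. snd (mkalg x y 0 (\<lambda>_. (0, 0)) s) = 0 \<and> 0 \<le> fst (mkalg x y 0 (\<lambda>_. (0, 0)) s) \<and> fst (mkalg x y 0 (\<lambda>_. (0, 0)) s) \<le> 1))"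
    by (rule mkalg_props) auto
  then show ?thesis using True by (intro exI[of _ "mkalg x y 0 (\<lambda>_. (0, 0))"]) (auto intro!: exI[of _ 0])
next
  case False
  define Alg where "Alg = {g. online_alg x y g}"
  define cI where "cI = Inf (CR x y ` Alg)"
  obtain g0 where g0: "g0 \<in> Alg" "CR x y g0 \<noteq> \<infinity>" using False by (auto simp: Alg_def)
  have "cI \<le> CR x y g0" unfolding cI_def using g0 by (intro Inf_lower) auto
  then have cI1: "cI \<noteq> \<infinity>" using g0 by auto
  have "0 \<le> cI" unfolding cI_def by (rule Inf_greatest) (auto simp: CR_nonneg)
  then obtain c where c: "cI = ereal c" using cI1 by (cases cI) auto
  have "\<forall>n. \<exists>g\<in>Alg. CR x y g < ereal (c + inverse (real (Suc n)))"
  proof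
    fix n
    have "Inf (CR x y ` Alg) < ereal (c + inverse (real (Suc n)))"
      using c by (simp add: cI_def[symmetric])
    then show "\<exists>g\<in>Alg. CR x y g < ereal (c + inverse (real (Suc n)))"
      by (subst (asm) Inf_less_iff) auto
  qed
  then obtain gs where gs: "\<And>n. gs n \<in> Alg" "\<And>n. CR x y (gs n) < ereal (c + inverse (real (Suc n)))"
    by metis
  obtain G B where Gon: "online_alg x y G"
    and meet: "\<forall>t\<in>{0..1}. \<exists>s. 0 \<le> s \<and> s \<le> B \<and> G s = pkg t s \<and> s + dist (G s) (1,0) \<le> c * opt x y t"
    and Gc: "continuous_on {0..B} G"
    using limit_alg[of x y gs c] gs by (auto simp: Alg_def less_imp_le)
  define seg where "seg = {p :: real \<times> real. snd p = 0 \<and> 0 \<le> fst p \<and> fst p \<le> 1}"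
  define Z where "Z = {0..B} \<inter> G -` seg"
  have "closed seg" unfolding seg_def
    by (intro closed_Collect_conj closed_Collect_eq closed_Collect_le continuous_intros)
  then have Zc: "closed Z" unfolding Z_def by (intro continuous_closed_preimage Gc) auto
  have pkg_seg: "t \<in> {0..1} \<Longrightarrow> 0 \<le> s \<Longrightarrow> pkg t s \<in> seg" for t s
    by (auto simp: pkg_def seg_def)
  obtain s0 where "0 \<le> s0" "s0 \<le> B" "G s0 = pkg 0 s0" using meet by force
  then have Zne: "Z \<noteq> {}" using pkg_seg[of 0 s0] by (auto simp: Z_def)
  have Zb: "bdd_below Z" unfolding Z_def by (rule bdd_belowI[of _ 0]) auto
  define \<tau> where "\<tau> = Inf Z"
  have tZ: "\<tau> \<in> Z" unfolding \<tau>_def using closed_contains_Inf[OF Zne Zb Zc] .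
  then have t0: "0 \<le> \<tau>" and Gt: "G \<tau> \<in> seg" by (auto simp: Z_def)
  define m where "m = fst (G \<tau>)"
  have Gtm: "G \<tau> = (m, 0)" and m: "0 \<le> m" "m \<le> 1" using Gt by (auto simp: m_def seg_def prod_eq_iff)
  define f where "f = mkalg x y m (\<lambda>s. G (max s \<tau>))"
  have ex: "online_alg x y f \<and>
    (let d = dist (x, y) (m, 0) in
          (\<forall>s. 0 \<le> s \<and> s \<le> d \<longrightarrow> f s = (x, y) + (s / d) *\<^sub>R ((m, 0) - (x, y))) \<and>
          (\<forall>s\<ge>d. snd (f s) = 0 \<and> 0 \<le> fst (f s) \<and> fst (f s) \<le> 1)) \<and>
    (\<forall>s\<ge>\<tau>. snd (G s) = 0 \<and> 0 \<le> fst (G s) \<and> fst (G s) \<le> 1 \<longrightarrow> f s = G s)"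
    unfolding f_def by (rule exchange[OF Gon t0 Gtm m])
  have A1: "CR x y f \<le> ereal c"
  proof (rule CR_le, intro ballI)
    fix t :: real assume t: "t \<in> {0..1}"
    then obtain s where s: "0 \<le> s" "s \<le> B" "G s = pkg t s" "s + dist (G s) (1,0) \<le> c * opt x y t"
      using meet by blast
    have "s \<in> Z" using s pkg_seg[OF t s(1)] by (auto simp: Z_def)
    then have "\<tau> \<le> s" unfolding \<tau>_def using Zb by (rule cInf_lower)
    then have "f s = G s" using ex pkg_seg[OF t s(1)] s(3) by (auto simp: seg_def)
    then show "\<exists>s\<ge>0. f s = pkg t s \<and> s + dist (f s) (1,0) \<le> c * opt x y t"
      using s by auto
  qed
  have A2: "ereal c \<le> CR x y g" if "online_alg x y g" for g
    using that c unfolding cI_def by (metis Alg_def Inf_lower image_eqI mem_Collect_eq)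
  have A3: "\<forall>g. online_alg x y g \<longrightarrow> CR x y f \<le> CR x y g"
    using A1 A2 order_trans by blast
  show ?thesis using ex m A3 by blast
qed


end
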